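(* For any hypergraph $H$, $\pi(S(H))\le\pi(H)$.
   Context: A hypergraph $H=(V,E)$ has finite vertex set $V$ and edge set $E\subseteq 2^V$; $R(H)=\{|F|:F\in E\}$. $H_1\subseteq H_2$ means there is an injective $f\colon V(H_1)\to V(H_2)$ with $f(F)\in E(H_2)$ for all $F\in E(H_1)$. For $G$ on $n$ vertices, $h_n(G)=\sum_{F\in E(G)}1/\binom{n}{|F|}$; $\pi_n(H)=\max\{h_n(G): G\text{ on } n \text{ vertices}, R(G)\subseteq R(H), H\not\subseteq G\}$ and $\pi(H)=\lim_n\pi_n(H)$. The suspension $S(H)$ has vertex set $V(H)\cup\{\ast\}$ for a new vertex $\ast$ and edge set $\{F\cup\{\ast\}: F\in E(H)\}$. *)

theory Defs
  imports Complex_Main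
begin

type_synonym 'a hgraph = "'a set \<times> 'a set set"

definition hypergraph :: "'a hgraph \<Rightarrow> bool" where
  "hypergraph H \<longleftrightarrow> finite (fst H) \<and> snd H \<subseteq> Pow (fst H)"

definition edge_sizes :: "'a hgraph \<Rightarrow> nat set" where
  "edge_sizes H = card ` snd H"

definition hcontained :: "'a hgraph \<Rightarrow> 'b hgraph \<Rightarrow> bool" where
  "hcontained H1 H2 \<longleftrightarrow>
     (\<exists>f. inj_on f (fst H1) \<and> f ` fst H1 \<subseteq> fst H2 \<and> (\<forall>F\<in>snd H1. f ` F \<in> snd H2))"

definition hlag :: "nat \<Rightarrow> 'a hgraph \<Rightarrow> real" where
  "hlag n G = (\<Sum>F\<in>snd G. 1 / real (n choose card F))"

text \<open>Hypergraphs on n vertices are taken (up to isomorphism) on the vertex set {0..<n}.\<close>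
definition pi_n :: "'a hgraph \<Rightarrow> nat \<Rightarrow> real" where
  "pi_n H n = Sup {hlag n G | G :: nat hgraph.
      hypergraph G \<and> fst G = {..<n} \<and> edge_sizes G \<subseteq> edge_sizes H \<and> \<not> hcontained H G}"

definition pi_lim :: "'a hgraph \<Rightarrow> real" where
  "pi_lim H = lim (\<lambda>n. pi_n H n)"

definition suspension :: "'a hgraph \<Rightarrow> 'a option hgraph" where
  "suspension H = (insert None (Some ` fst H), (\<lambda>F. insert None (Some ` F)) ` snd H)"

end

theory Submission
  imports Defs
begin

definition tau :: "nat \<Rightarrow> nat \<Rightarrow> nat" where
  "tau v x = (if x < v then x else Suc x)"

definition pull :: "nat \<Rightarrow> nat \<Rightarrow> nat set set \<Rightarrow> nat hgraph" where
  "pull v n E0 = ({..<n}, (\<lambda>F. tau v -` F \<inter> {..<n}) ` E0)"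

lemma tau_inj: "inj (tau v)"
  unfolding inj_def tau_def by auto

lemma tau_img: "v \<le> n \<Longrightarrow> tau v ` {..<n} = {..<Suc n} - {v}"
proof
  show "tau v ` {..<n} \<subseteq> {..<Suc n} - {v}" unfolding tau_def by auto
next
  assume vn: "v \<le> n"
  show "{..<Suc n} - {v} \<subseteq> tau v ` {..<n}"
  proof
    fix y assume y: "y \<in> {..<Suc n} - {v}"
    show "y \<in> tau v ` {..<n}"
    proof (cases "y < v")
      case True
      then have "tau v y = y" "y < n" using vn unfolding tau_def by auto
      then show ?thesis by (metis image_eqI lessThan_iff)
    next
      case False
      then have "y > v" using y by auto
      then obtain z where z: "y = Suc z" "z \<ge> v" by (cases y) auto
      then have "tau v z = y" "z < n" using y unfolding tau_def by auto
      then show ?thesis by (metis image_eqI lessThan_iff)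
    qed
  qed
qed

lemma pull_img:
  assumes "v \<le> n" "F \<subseteq> {..<Suc n} - {v}"
  shows "tau v ` (tau v -` F \<inter> {..<n}) = F"
proof -
  have "tau v ` (tau v -` F \<inter> {..<n}) = F \<inter> tau v ` {..<n}" by auto
  also have "\<dots> = F" using assms tau_img[of v n] by auto
  finally show ?thesis .
qed

lemma pull_card:
  assumes "v \<le> n" "F \<subseteq> {..<Suc n} - {v}"
  shows "card (tau v -` F \<inter> {..<n}) = card F"
proof -
  have "card (tau v ` (tau v -` F \<inter> {..<n})) = card (tau v -` F \<inter> {..<n})"
    by (rule card_image) (meson inj_on_subset subset_UNIV tau_inj)
  then show ?thesis using pull_img[OF assms] by simp
qed

lemma pull_inj:
  assumes "v \<le> n" "\<forall>F\<in>E0. F \<subseteq> {..<Suc n} - {v}"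
  shows "inj_on (\<lambda>F. tau v -` F \<inter> {..<n}) E0"
proof (rule inj_onI)
  fix F F' assume "F \<in> E0" "F' \<in> E0" and eq: "tau v -` F \<inter> {..<n} = tau v -` F' \<inter> {..<n}"
  have "F = tau v ` (tau v -` F \<inter> {..<n})"
    using pull_img[OF assms(1), of F] assms(2) \<open>F \<in> E0\<close> by simp
  moreover have "F' = tau v ` (tau v -` F' \<inter> {..<n})"
    using pull_img[OF assms(1), of F'] assms(2) \<open>F' \<in> E0\<close> by simp
  ultimately
  show "F = F'" using eq by simp
qed

lemma hlag_pull:
  assumes "v \<le> n" "\<forall>F\<in>E0. F \<subseteq> {..<Suc n} - {v}"
  shows "hlag n (pull v n E0) = (\<Sum>F\<in>E0. 1 / real (n choose card F))"
  unfolding hlag_def pull_def snd_conv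
  by (subst sum.reindex[OF pull_inj[OF assms]]) (simp add: pull_card[OF assms(1)] assms(2))

lemma edge_sizes_pull:
  assumes "v \<le> n" "\<forall>F\<in>E0. F \<subseteq> {..<Suc n} - {v}"
  shows "edge_sizes (pull v n E0) = card ` E0"
  unfolding edge_sizes_def pull_def snd_conv image_image
  using pull_card[OF assms(1)] assms(2) by (auto simp: image_iff)

lemma hypergraph_pull: "hypergraph (pull v n E0)"
  unfolding hypergraph_def pull_def by auto

lemma hcont_pull:
  assumes "v \<le> n" "\<forall>F\<in>E0. F \<subseteq> {..<Suc n} - {v}"
    and "hcontained H (pull v n E0)"
  shows "hcontained H ({..<Suc n} - {v}, E0)"
proof -
  obtain f where f: "inj_on f (fst H)" "f ` fst H \<subseteq> {..<n}"
    "\<forall>A\<in>snd H. f ` A \<in> (\<lambda>F. tau v -` F \<inter> {..<n}) ` E0"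
    using assms(3) unfolding hcontained_def pull_def by auto
  have "inj_on (tau v \<circ> f) (fst H)"
    using f(1) tau_inj[of v] by (meson comp_inj_on inj_on_subset subset_UNIV)
  moreover have "(tau v \<circ> f) ` fst H \<subseteq> {..<Suc n} - {v}"
    using f(2) tau_img[OF assms(1)] by (auto simp: image_comp[symmetric])
  moreover have "\<forall>A\<in>snd H. (tau v \<circ> f) ` A \<in> E0"
  proof
    fix A assume "A \<in> snd H"
    then obtain F where F: "F \<in> E0" "f ` A = tau v -` F \<inter> {..<n}" using f(3) by auto
    have "(tau v \<circ> f) ` A = tau v ` (f ` A)" by (simp add: image_comp)
    also have "\<dots> = F" using F pull_img[OF assms(1), of F] assms(2) by simp
    finally show "(tau v \<circ> f) ` A \<in> E0" using F(1) by simp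
  qed
  ultimately show ?thesis unfolding hcontained_def fst_conv snd_conv by blast
qed

lemma hcont_mono:
  "hcontained H (V, E0) \<Longrightarrow> V \<subseteq> V' \<Longrightarrow> E0 \<subseteq> E \<Longrightarrow> hcontained H (V', E)"
  unfolding hcontained_def by (auto, blast)

lemma hcont_susp:
  assumes "v \<in> V" "hcontained H (V - {v}, (\<lambda>F. F - {v}) ` {F\<in>E. v\<in>F})"
  shows "hcontained (suspension H) (V, E)"
proof -
  obtain f where f: "inj_on f (fst H)" "f ` fst H \<subseteq> V - {v}"
    "\<forall>A\<in>snd H. f ` A \<in> (\<lambda>F. F - {v}) ` {F\<in>E. v\<in>F}"
    using assms(2) unfolding hcontained_def by auto
  define g where "g x = (case x of None \<Rightarrow> v | Some a \<Rightarrow> f a)" for x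
  have "inj_on g (insert None (Some ` fst H))"
    using f(1,2) unfolding g_def inj_on_def by (auto split: option.splits)
  moreover have "g ` (insert None (Some ` fst H)) \<subseteq> V"
    using f(2) assms(1) unfolding g_def by auto
  moreover have "\<forall>A\<in>snd H. g ` (insert None (Some ` A)) \<in> E"
  proof
    fix A assume "A \<in> snd H"
    then obtain F where F: "F \<in> E" "v \<in> F" "f ` A = F - {v}" using f(3) by auto
    have "g ` (insert None (Some ` A)) = insert v (f ` A)"
      unfolding g_def by (auto simp: image_image)
    also have "\<dots> = F" using F by auto
    finally show "g ` (insert None (Some ` A)) \<in> E" using F by simp
  qed
  ultimately show ?thesis unfolding hcontained_def suspension_def by auto
qed

lemma pset_finite:
  "finite {hlag n G | G :: nat hgraph. hypergraph G \<and> fst G = {..<n} \<and> edge_sizes G \<subseteq> edge_sizes H \<and> \<not> hcontained H G}"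
proof (rule finite_subset)
  show "{hlag n G | G :: nat hgraph. hypergraph G \<and> fst G = {..<n} \<and> edge_sizes G \<subseteq> edge_sizes H \<and> \<not> hcontained H G}
     \<subseteq> hlag n ` ({{..<n}} \<times> Pow (Pow {..<n}))"
    unfolding hypergraph_def by (auto simp: image_iff)
qed auto

lemma pi_upper:
  "hypergraph G \<Longrightarrow> fst G = {..<n} \<Longrightarrow> edge_sizes G \<subseteq> edge_sizes H \<Longrightarrow> \<not> hcontained H G
   \<Longrightarrow> hlag n G \<le> pi_n H n"
  unfolding pi_n_def
proof (rule cSup_upper)
  assume "hypergraph G" "fst G = {..<n}" "edge_sizes G \<subseteq> edge_sizes H" "\<not> hcontained H G"
  then show "hlag n G \<in> {hlag n G | G :: nat hgraph. hypergraph G \<and> fst G = {..<n} \<and> edge_sizes G \<subseteq> edge_sizes H \<and> \<not> hcontained H G}"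
    by blast
  show "bdd_above {hlag n G | G :: nat hgraph. hypergraph G \<and> fst G = {..<n} \<and> edge_sizes G \<subseteq> edge_sizes H \<and> \<not> hcontained H G}"
    by (rule bdd_above_finite[OF pset_finite])
qed

lemma not_hcont_empty: "snd H \<noteq> {} \<Longrightarrow> \<not> hcontained H (V, {})"
  unfolding hcontained_def by auto

lemma pi_least:
  assumes "snd H \<noteq> {}"
    and "\<And>G. hypergraph G \<Longrightarrow> fst G = {..<n} \<Longrightarrow> edge_sizes G \<subseteq> edge_sizes H \<Longrightarrow> \<not> hcontained H G \<Longrightarrow> hlag n G \<le> z"
  shows "pi_n H n \<le> z"
  unfolding pi_n_def
proof (rule cSup_least)
  have "hlag n ({..<n}, {}) \<in> {hlag n G | G :: nat hgraph. hypergraph G \<and> fst G = {..<n} \<and> edge_sizes G \<subseteq> edge_sizes H \<and> \<not> hcontained H G}"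
    using not_hcont_empty[OF assms(1)] by (auto simp: hypergraph_def edge_sizes_def)
  then show "{hlag n G | G :: nat hgraph. hypergraph G \<and> fst G = {..<n} \<and> edge_sizes G \<subseteq> edge_sizes H \<and> \<not> hcontained H G} \<noteq> {}" by blast
qed (use assms(2) in blast)

lemma pi_nonneg: "snd H \<noteq> {} \<Longrightarrow> 0 \<le> pi_n H n"
proof -
  assume "snd H \<noteq> {}"
  then have "hlag n ({..<n}, {}) \<le> pi_n H n"
    by (intro pi_upper) (auto simp: hypergraph_def edge_sizes_def not_hcont_empty)
  then show ?thesis by (simp add: hlag_def)
qed

lemma arith_del:
  assumes "k \<le> n"
  shows "real (Suc n - k) / real (n choose k) = real (Suc n) / real (Suc n choose k)"
proof -
  have e: "(Suc n - k) * (Suc n choose k) = Suc n * (n choose k)"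
    using binomial_absorb_comp[of "Suc n" k] by simp
  have "0 < n choose k" "0 < Suc n choose k" using assms by auto
  moreover have "real (Suc n - k) * real (Suc n choose k) = real (Suc n) * real (n choose k)"
    using e by (metis of_nat_mult)
  ultimately show ?thesis by (simp add: frac_eq_eq)
qed

lemma arith_link:
  assumes "1 \<le> k" "k \<le> Suc n"
  shows "real k / real (n choose (k - 1)) = real (Suc n) / real (Suc n choose k)"
proof -
  obtain j where j: "k = Suc j" using assms(1) by (cases k) auto
  have e: "k * (Suc n choose k) = Suc n * (n choose (k - 1))"
    using Suc_times_binomial[of j n] j by simp
  have "0 < n choose (k - 1)" "0 < Suc n choose k" using assms j by auto
  moreover have "real k * real (Suc n choose k) = real (Suc n) * real (n choose (k - 1))"
    using e by (metis of_nat_mult)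
  ultimately show ?thesis by (simp add: frac_eq_eq)
qed

lemma pi_mono:
  assumes hyp: "hypergraph H" and ne: "snd H \<noteq> {}" and cn: "card (fst H) \<le> n"
  shows "pi_n H (Suc n) \<le> pi_n H n"
proof (rule pi_least[OF ne])
  fix G :: "nat hgraph"
  assume G: "hypergraph G" "fst G = {..<Suc n}" "edge_sizes G \<subseteq> edge_sizes H" "\<not> hcontained H G"
  define E where "E = snd G"
  define p where "p = pi_n H n"
  have Esub: "\<forall>F\<in>E. F \<subseteq> {..<Suc n}" using G(1,2) unfolding hypergraph_def E_def by auto
  have finE: "finite E" using Esub by (intro finite_subset[of E "Pow {..<Suc n}"]) auto
  have cardF: "card F \<le> n" if "F \<in> E" for F
  proof -
    have "card F \<in> edge_sizes H" using G(3) that unfolding edge_sizes_def E_def by auto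
    then obtain A where "A \<in> snd H" "card F = card A" unfolding edge_sizes_def by auto
    moreover have "A \<subseteq> fst H" "finite (fst H)" using hyp \<open>A \<in> snd H\<close> unfolding hypergraph_def by auto
    ultimately show ?thesis using cn card_mono[of "fst H" A] by simp
  qed
  have each: "(\<Sum>F\<in>{F. F \<in> E \<and> v \<notin> F}. 1 / real (n choose card F)) \<le> p" if v: "v < Suc n" for v
  proof -
    define E0 where "E0 = {F. F \<in> E \<and> v \<notin> F}"
    have vn: "v \<le> n" using v by simp
    have hE0: "\<forall>F\<in>E0. F \<subseteq> {..<Suc n} - {v}" using Esub unfolding E0_def by auto
    have "\<not> hcontained H (pull v n E0)"
    proof
      assume "hcontained H (pull v n E0)"
      from hcont_pull[OF vn hE0 this] have "hcontained H (fst G, snd G)"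
        by (rule hcont_mono) (auto simp: G(2) E0_def E_def)
      then show False using G(4) by simp
    qed
    moreover have "edge_sizes (pull v n E0) \<subseteq> edge_sizes H"
      using edge_sizes_pull[OF vn hE0] G(3) unfolding E0_def E_def edge_sizes_def by auto
    ultimately have "hlag n (pull v n E0) \<le> p"
      unfolding p_def by (intro pi_upper hypergraph_pull) (auto simp: pull_def)
    then show ?thesis using hlag_pull[OF vn hE0] unfolding E0_def by simp
  qed
  have "(\<Sum>v\<in>{..<Suc n}. \<Sum>F\<in>{F. F \<in> E \<and> v \<notin> F}. 1 / real (n choose card F))
      = (\<Sum>F\<in>E. \<Sum>v\<in>{v. v \<in> {..<Suc n} \<and> v \<notin> F}. 1 / real (n choose card F))"
    by (rule sum.swap_restrict) (auto simp: finE)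
  also have "\<dots> = (\<Sum>F\<in>E. real (Suc n) / real (Suc n choose card F))"
  proof (rule sum.cong[OF refl])
    fix F assume F: "F \<in> E"
    have "{v. v \<in> {..<Suc n} \<and> v \<notin> F} = {..<Suc n} - F" by auto
    then have "card {v. v \<in> {..<Suc n} \<and> v \<notin> F} = Suc n - card F"
    proof -
      have "F \<subseteq> {..<Suc n}" using Esub F by auto
      moreover then have "finite F" by (rule finite_subset) simp
      ultimately have "card ({..<Suc n} - F) = card {..<Suc n} - card F" by (simp add: card_Diff_subset)
      then show ?thesis using \<open>{v. v \<in> {..<Suc n} \<and> v \<notin> F} = {..<Suc n} - F\<close> by simp
    qed
    then show "(\<Sum>v\<in>{v. v \<in> {..<Suc n} \<and> v \<notin> F}. 1 / real (n choose card F))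
       = real (Suc n) / real (Suc n choose card F)"
      using arith_del[OF cardF[OF F]] by simp
  qed
  also have "\<dots> = real (Suc n) * hlag (Suc n) G"
    unfolding hlag_def E_def by (simp add: sum_distrib_left)
  finally have eqS: "(\<Sum>v\<in>{..<Suc n}. \<Sum>F\<in>{F. F \<in> E \<and> v \<notin> F}. 1 / real (n choose card F)) = real (Suc n) * hlag (Suc n) G" .
  have "(\<Sum>v\<in>{..<Suc n}. \<Sum>F\<in>{F. F \<in> E \<and> v \<notin> F}. 1 / real (n choose card F)) \<le> (\<Sum>v\<in>{..<Suc n}. p)"
    using each by (intro sum_mono) simp
  then have "real (Suc n) * hlag (Suc n) G \<le> real (Suc n) * p" using eqS by simp
  then show "hlag (Suc n) G \<le> pi_n H n" unfolding p_def
    by (rule mult_left_le_imp_le) simp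
qed

lemma card_susp_edge:
  assumes "hypergraph H" "k \<in> edge_sizes (suspension H)"
  shows "k \<ge> 1 \<and> k - 1 \<in> edge_sizes H"
proof -
  obtain A where A: "A \<in> snd H" "k = card (insert None (Some ` A))"
    using assms(2) unfolding edge_sizes_def suspension_def by auto
  have "finite A" using assms(1) A(1) unfolding hypergraph_def by (auto intro: finite_subset)
  then have "k = Suc (card A)" using A(2) by (simp add: card_image)
  then show ?thesis using A(1) unfolding edge_sizes_def by auto
qed

lemma pi_link:
  assumes hyp: "hypergraph H" and ne: "snd H \<noteq> {}"
  shows "pi_n (suspension H) (Suc n) \<le> pi_n H n"
proof (rule pi_least)
  show "snd (suspension H) \<noteq> {}" using ne unfolding suspension_def by auto
next
  fix G :: "nat hgraph"
  assume G: "hypergraph G" "fst G = {..<Suc n}" "edge_sizes G \<subseteq> edge_sizes (suspension H)"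
    "\<not> hcontained (suspension H) G"
  define E where "E = snd G"
  define p where "p = pi_n H n"
  have Esub: "\<forall>F\<in>E. F \<subseteq> {..<Suc n}" using G(1,2) unfolding hypergraph_def E_def by auto
  have finE: "finite E" using Esub by (intro finite_subset[of E "Pow {..<Suc n}"]) auto
  have finF: "finite F" if "F \<in> E" for F using Esub that by (meson finite_lessThan finite_subset)
  have cardF: "card F \<ge> 1 \<and> card F - 1 \<in> edge_sizes H" if "F \<in> E" for F
    using card_susp_edge[OF hyp] G(3) that unfolding E_def edge_sizes_def by auto
  have cardF2: "card F \<le> Suc n" if "F \<in> E" for F
    using Esub that card_mono[of "{..<Suc n}" F] by simp
  have each: "(\<Sum>F\<in>{F. F \<in> E \<and> v \<in> F}. 1 / real (n choose (card F - 1))) \<le> p" if v: "v < Suc n" for v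
  proof -
    define E0 where "E0 = (\<lambda>F. F - {v}) ` {F. F \<in> E \<and> v \<in> F}"
    have vn: "v \<le> n" using v by simp
    have hE0: "\<forall>F\<in>E0. F \<subseteq> {..<Suc n} - {v}" using Esub unfolding E0_def by auto
    have inj: "inj_on (\<lambda>F. F - {v}) {F. F \<in> E \<and> v \<in> F}"
    proof (rule inj_onI)
      fix F F' assume "F \<in> {F. F \<in> E \<and> v \<in> F}" "F' \<in> {F. F \<in> E \<and> v \<in> F}" "F - {v} = F' - {v}"
      then have "insert v (F - {v}) = insert v (F' - {v})" "v \<in> F" "v \<in> F'" by auto
      then show "F = F'" by (simp add: insert_absorb)
    qed
    have "\<not> hcontained H (pull v n E0)"
    proof
      assume "hcontained H (pull v n E0)"
      from hcont_pull[OF vn hE0 this] have "hcontained H (fst G - {v}, (\<lambda>F. F - {v}) ` {F\<in>snd G. v\<in>F})"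
        by (simp add: G(2) E0_def E_def)
      from hcont_susp[OF _ this] have "hcontained (suspension H) (fst G, snd G)" using G(2) v by simp
      then show False using G(4) by simp
    qed
    moreover have "edge_sizes (pull v n E0) \<subseteq> edge_sizes H"
      using edge_sizes_pull[OF vn hE0] cardF finF unfolding E0_def by auto
    ultimately have "hlag n (pull v n E0) \<le> p"
      unfolding p_def by (intro pi_upper hypergraph_pull) (auto simp: pull_def)
    moreover have "hlag n (pull v n E0) = (\<Sum>F\<in>{F. F \<in> E \<and> v \<in> F}. 1 / real (n choose (card F - 1)))"
    proof -
      have "hlag n (pull v n E0) = (\<Sum>F'\<in>E0. 1 / real (n choose card F'))"
        by (rule hlag_pull[OF vn hE0])
      also have "\<dots> = (\<Sum>F\<in>{F. F \<in> E \<and> v \<in> F}. 1 / real (n choose card (F - {v})))"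
        unfolding E0_def sum.reindex[OF inj] comp_def ..
      also have "\<dots> = (\<Sum>F\<in>{F. F \<in> E \<and> v \<in> F}. 1 / real (n choose (card F - 1)))"
      proof (rule sum.cong[OF refl])
        fix F assume "F \<in> {F. F \<in> E \<and> v \<in> F}"
        then have "card (F - {v}) = card F - 1" using finF by (simp add: card_Diff_singleton)
        then show "1 / real (n choose card (F - {v})) = 1 / real (n choose (card F - 1))" by simp
      qed
      finally show ?thesis .
    qed
    ultimately show ?thesis by simp
  qed
  have "(\<Sum>v\<in>{..<Suc n}. \<Sum>F\<in>{F. F \<in> E \<and> v \<in> F}. 1 / real (n choose (card F - 1)))
      = (\<Sum>F\<in>E. \<Sum>v\<in>{v. v \<in> {..<Suc n} \<and> v \<in> F}. 1 / real (n choose (card F - 1)))"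
    by (rule sum.swap_restrict) (auto simp: finE)
  also have "\<dots> = (\<Sum>F\<in>E. real (Suc n) / real (Suc n choose card F))"
  proof (rule sum.cong[OF refl])
    fix F assume F: "F \<in> E"
    have "{v. v \<in> {..<Suc n} \<and> v \<in> F} = F" using Esub F by auto
    then show "(\<Sum>v\<in>{v. v \<in> {..<Suc n} \<and> v \<in> F}. 1 / real (n choose (card F - 1)))
       = real (Suc n) / real (Suc n choose card F)"
      using arith_link[of "card F" n] cardF[OF F] cardF2[OF F] by simp
  qed
  also have "\<dots> = real (Suc n) * hlag (Suc n) G"
    unfolding hlag_def E_def by (simp add: sum_distrib_left)
  finally have eqS: "(\<Sum>v\<in>{..<Suc n}. \<Sum>F\<in>{F. F \<in> E \<and> v \<in> F}. 1 / real (n choose (card F - 1))) = real (Suc n) * hlag (Suc n) G" .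
  have "(\<Sum>v\<in>{..<Suc n}. \<Sum>F\<in>{F. F \<in> E \<and> v \<in> F}. 1 / real (n choose (card F - 1))) \<le> (\<Sum>v\<in>{..<Suc n}. p)"
    using each by (intro sum_mono) simp
  then have "real (Suc n) * hlag (Suc n) G \<le> real (Suc n) * p" using eqS by simp
  then show "hlag (Suc n) G \<le> pi_n H n" unfolding p_def
    by (rule mult_left_le_imp_le) simp
qed

lemma pi_conv:
  assumes "hypergraph H" "snd H \<noteq> {}"
  shows "convergent (pi_n H)"
proof -
  define M where "M = card (fst H)"
  have dec: "pi_n H n \<le> pi_n H m" if "M \<le> m" "m \<le> n" for m n
    using that(2)
  proof (induction n rule: dec_induct)
    case (step k)
    then show ?case using pi_mono[OF assms, of k] that(1) unfolding M_def by simp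
  qed simp
  have "Bseq (\<lambda>n. pi_n H (n + M))"
    by (rule BseqI'[where K = "pi_n H M"]) (use dec pi_nonneg[OF assms(2)] in auto)
  then show ?thesis
    by (rule Bseq_monoseq_convergent'_dec) (use dec in auto)
qed

lemma pi_noedge:
  assumes "hypergraph H" "snd H = {}" "card (fst H) \<le> n"
  shows "pi_n H n = Sup {}"
proof -
  have "hcontained H G" if "fst G = {..<n}" for G :: "nat hgraph"
  proof -
    have "finite (fst H)" using assms(1) unfolding hypergraph_def by simp
    then obtain f where "f ` fst H \<subseteq> {..<n}" "inj_on f (fst H)"
      using card_le_inj[of "fst H" "{..<n}"] assms(3) by auto
    then show ?thesis unfolding hcontained_def using assms(2) that by auto
  qed
  then show ?thesis unfolding pi_n_def by auto
qed

lemma lim_noedge: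
  assumes "hypergraph H" "snd H = {}"
  shows "pi_lim H = Sup {}"
proof -
  have "eventually (\<lambda>n. pi_n H n = Sup {}) sequentially"
    using pi_noedge[OF assms] eventually_sequentially by blast
  then have "pi_n H \<longlonglongrightarrow> Sup {}" by (rule tendsto_eventually)
  then show ?thesis unfolding pi_lim_def by (rule limI)
qed

lemma hypergraph_susp: "hypergraph H \<Longrightarrow> hypergraph (suspension H)"
  unfolding hypergraph_def suspension_def by auto

theorem mainTheorem17:
  fixes H :: "'a hgraph"
  assumes "hypergraph H"
  shows "pi_lim (suspension H) \<le> pi_lim H"
proof (cases "snd H = {}")
  case True
  have "snd (suspension H) = {}" using True unfolding suspension_def by simp
  then show ?thesis using lim_noedge[OF assms True] lim_noedge[OF hypergraph_susp[OF assms]] by simp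
next
  case False
  have ne2: "snd (suspension H) \<noteq> {}" using False unfolding suspension_def by simp
  obtain a where a: "pi_n H \<longlonglongrightarrow> a" using pi_conv[OF assms False] convergent_def by blast
  obtain b where b: "pi_n (suspension H) \<longlonglongrightarrow> b"
    using pi_conv[OF hypergraph_susp[OF assms] ne2] convergent_def by blast
  have b': "(\<lambda>n. pi_n (suspension H) (Suc n)) \<longlonglongrightarrow> b" using b by (rule LIMSEQ_Suc)
  have "b \<le> a"
    by (rule LIMSEQ_le[OF b' a]) (use pi_link[OF assms False] in auto)
  then show ?thesis unfolding pi_lim_def using limI[OF a] limI[OF b] by simp
qed

end
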